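(* Let $P_n$ be the path with vertices $x_1,\dots,x_n$ and edges $\{x_i,x_{i+1}\}$ ($1\le i\le n-1$). Then no stable set corresponding to $v(P_n)$ contains both endpoints $x_1$ and $x_n$.
   Context: Let $K$ be a field and $S=K[x_1,\dots,x_n]$ standard graded. For a proper graded ideal $I$, the $v$-number is $v(I)=\min\{k\ge 0 : \exists f\in S_k,\ \mathcal P\in\operatorname{Ass}(S/I) \text{ with } (I:f)=\mathcal P\}$. For a graph $G$, $I(G)$ is its edge ideal (generated by $x_ix_j$ over edges $\{x_i,x_j\}$) and $v(G):=v(I(G))$. A set $A$ of vertices is stable if it contains no edge. For a stable set $A$, its neighbour set is $N_G(A)=\{x\in V(G) : \{x\}\cup A \text{ contains an edge of } G\}$. A vertex cover is a set of vertices meeting every edge; it is minimal if minimal under inclusion. Let $\mathcal A_G$ be the collection of stable sets $A$ of $G$ such that $N_G(A)$ is a minimal vertex cover of $G$; it is known that $v(G)=\min\{|A| : A\in\mathcal A_G\}$. A stable set corresponding to $v(G)$ is an $A\in\mathcal A_G$ with $|A|=v(G)$. *)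

theory Defs
  imports Main
begin

text \<open>A simple graph is given by a vertex set V and a set E of edges, each edge
a two-element subset of V.\<close>

definition stable_set :: "'a set \<Rightarrow> 'a set set \<Rightarrow> 'a set \<Rightarrow> bool" where
  "stable_set V E A \<longleftrightarrow> A \<subseteq> V \<and> (\<forall>e\<in>E. \<not> e \<subseteq> A)"

definition nbr_set :: "'a set \<Rightarrow> 'a set set \<Rightarrow> 'a set \<Rightarrow> 'a set" where
  "nbr_set V E A = {x \<in> V. \<exists>e\<in>E. e \<subseteq> insert x A}"

definition vertex_cover :: "'a set \<Rightarrow> 'a set set \<Rightarrow> 'a set \<Rightarrow> bool" where
  "vertex_cover V E C \<longleftrightarrow> C \<subseteq> V \<and> (\<forall>e\<in>E. e \<inter> C \<noteq> {})"

definition min_vertex_cover :: "'a set \<Rightarrow> 'a set set \<Rightarrow> 'a set \<Rightarrow> bool" where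
  "min_vertex_cover V E C \<longleftrightarrow> vertex_cover V E C \<and> (\<forall>D. D \<subset> C \<longrightarrow> \<not> vertex_cover V E D)"

definition calA :: "'a set \<Rightarrow> 'a set set \<Rightarrow> 'a set set" where
  "calA V E = {A. stable_set V E A \<and> min_vertex_cover V E (nbr_set V E A)}"

text \<open>v(G) = min{|A| : A \<in> \<A>_G} (the known combinatorial characterisation).\<close>
definition v_number :: "'a set \<Rightarrow> 'a set set \<Rightarrow> nat" where
  "v_number V E = Min (card ` calA V E)"

definition path_vertices :: "nat \<Rightarrow> nat set" where
  "path_vertices n = {1..n}"

definition path_edges :: "nat \<Rightarrow> nat set set" where
  "path_edges n = {{i, Suc i} | i. 1 \<le> i \<and> i < n}"

end

theory Submission
  imports Defs
begin

lemma min_auto: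
  assumes st: "stable_set V E A" and vc: "vertex_cover V E (nbr_set V E A)"
  shows "min_vertex_cover V E (nbr_set V E A)"
proof -
  have AN: "a \<notin> nbr_set V E A" if "a \<in> A" for a
  proof
    assume "a \<in> nbr_set V E A"
    then obtain e' where e': "e' \<in> E" "e' \<subseteq> insert a A" unfolding nbr_set_def by blast
    have "insert a A = A" using \<open>a \<in> A\<close> by (rule insert_absorb)
    then have "e' \<subseteq> A" using e' by simp
    thus False using st e'(1) unfolding stable_set_def by blast
  qed
  have "\<not> vertex_cover V E D" if D: "D \<subset> nbr_set V E A" for D
  proof
    assume vD: "vertex_cover V E D"
    obtain x where x: "x \<in> nbr_set V E A" "x \<notin> D" using D by blast
    then obtain e where e: "e \<in> E" "e \<subseteq> insert x A" unfolding nbr_set_def by blast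
    have "e \<inter> D \<noteq> {}" using vD e(1) unfolding vertex_cover_def by blast
    then obtain y where y: "y \<in> e" "y \<in> D" by blast
    have "y \<in> nbr_set V E A" using y(2) D by blast
    moreover have "y = x \<or> y \<in> A" using y(1) e(2) by blast
    ultimately show False using x(2) y(2) AN by blast
  qed
  then show ?thesis unfolding min_vertex_cover_def using vc by blast
qed

lemma nbr_path:
  "x \<in> nbr_set (path_vertices n) (path_edges n) A \<longleftrightarrow>
     x \<in> {1..n} \<and> (\<exists>i. 1 \<le> i \<and> i < n \<and> {i, Suc i} \<subseteq> insert x A)"
proof -
  have "(\<exists>e\<in>{{i, Suc i} |i. 1 \<le> i \<and> i < n}. e \<subseteq> insert x A) \<longleftrightarrow>
        (\<exists>i. 1 \<le> i \<and> i < n \<and> {i, Suc i} \<subseteq> insert x A)" by blast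
  then show ?thesis unfolding nbr_set_def path_vertices_def path_edges_def by simp
qed

lemma lower:
  assumes AV: "A \<subseteq> {1..n}" and st: "\<And>i. i \<in> A \<Longrightarrow> Suc i \<notin> A"
    and cov: "\<And>i. 1 \<le> i \<Longrightarrow> i < n \<Longrightarrow> i \<in> N \<or> Suc i \<in> N"
    and Nchar: "\<And>x. x \<in> N \<longleftrightarrow> x \<in> {1..n} \<and> (\<exists>i. 1 \<le> i \<and> i < n \<and> {i, Suc i} \<subseteq> insert x A)"
    and one: "1 \<in> A" and nA: "n \<in> A"
  shows "n + 3 \<le> 4 * card A"
proof -
  define N1 where "N1 = {x \<in> {1..n}. x \<notin> A \<and> x \<ge> 2 \<and> x - 1 \<in> A}"
  define N2 where "N2 = {x \<in> {1..n}. Suc x \<in> A}"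
  define R where "R = {x \<in> {1..n}. x \<notin> A \<and> x \<notin> N1 \<and> x \<notin> N2}"
  have fA: "finite A" using AV finite_subset by blast
  have fN1: "finite N1" unfolding N1_def by simp
  have fN2: "finite N2" unfolding N2_def by simp
  have fR: "finite R" unfolding R_def by simp
  have "n = card {1..n}" by simp
  also have "\<dots> \<le> card (A \<union> N1 \<union> N2 \<union> R)"
  proof (rule card_mono)
    show "finite (A \<union> N1 \<union> N2 \<union> R)" using fA fN1 fN2 fR by simp
    show "{1..n} \<subseteq> A \<union> N1 \<union> N2 \<union> R" unfolding R_def by blast
  qed
  finally have t0: "n \<le> card (A \<union> N1 \<union> N2 \<union> R)" .
  have t1: "card (A \<union> N1 \<union> N2 \<union> R) \<le> card (A \<union> N1 \<union> N2) + card R" by (rule card_Un_le)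
  have t2: "card (A \<union> N1 \<union> N2) \<le> card (A \<union> N1) + card N2" by (rule card_Un_le)
  have t3: "card (A \<union> N1) \<le> card A + card N1" by (rule card_Un_le)
  have tot: "n \<le> card A + card N1 + card N2 + card R" using t0 t1 t2 t3 by linarith
  have c1: "card N1 \<le> card (A - {n})"
  proof (rule card_inj_on_le[where f = "\<lambda>x. x - 1"])
    show "inj_on (\<lambda>x. x - 1) N1" unfolding inj_on_def N1_def by auto
    show "(\<lambda>x. x - 1) ` N1 \<subseteq> A - {n}" unfolding N1_def by auto
  qed (use fA in auto)
  have c2: "card N2 \<le> card (A - {1})"
  proof (rule card_inj_on_le[where f = Suc])
    show "inj_on Suc N2" by simp
    show "Suc ` N2 \<subseteq> A - {1}" unfolding N2_def by auto
  qed (use fA in auto)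
  have Rprop: "x \<ge> 3 \<and> x - 2 \<in> A" if xR: "x \<in> R" for x
  proof -
    have xV: "x \<in> {1..n}" "x \<notin> A" "x \<notin> N1" "x \<notin> N2" using xR unfolding R_def by auto
    have xN: "x \<notin> N"
    proof
      assume "x \<in> N"
      then obtain i where i: "1 \<le> i" "i < n" "{i, Suc i} \<subseteq> insert x A" using iffD1[OF Nchar] by blast
      show False
      proof (cases "i = x")
        case True
        then show ?thesis using i xV unfolding N2_def by auto
      next
        case False
        then have "i \<in> A" using i by auto
        then have "Suc i = x" using i st by auto
        then show ?thesis using xV \<open>i \<in> A\<close> i unfolding N1_def by auto
      qed
    qed
    have "x \<noteq> 1" using one xV by auto
    then have x2: "x \<ge> 2" using xV by auto
    have "x - 1 \<in> N \<or> Suc (x - 1) \<in> N" using cov[of "x - 1"] x2 xV by auto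
    moreover have "Suc (x - 1) = x" using x2 by simp
    ultimately have "x - 1 \<in> N" using xN by auto
    then obtain i where i: "1 \<le> i" "i < n" "{i, Suc i} \<subseteq> insert (x - 1) A" using iffD1[OF Nchar] by blast
    show ?thesis
    proof (cases "i = x - 1")
      case True
      then have "Suc i = x" using x2 by auto
      then show ?thesis using i True xV by auto
    next
      case False
      then have "i \<in> A" using i by auto
      then have "Suc i = x - 1" using i st by auto
      then have "x - 2 = i" "x \<ge> 3" using i by arith+
      then show ?thesis using \<open>i \<in> A\<close> by auto
    qed
  qed
  have c3: "card R \<le> card (A - {n})"
  proof (rule card_inj_on_le[where f = "\<lambda>x. x - 2"])
    show "inj_on (\<lambda>x. x - 2) R"
    proof (rule inj_onI)
      fix x y assume "x \<in> R" "y \<in> R" "x - 2 = y - 2"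
      moreover have "x \<ge> 3" "y \<ge> 3" using Rprop \<open>x \<in> R\<close> \<open>y \<in> R\<close> by blast+
      ultimately show "x = y" by arith
    qed
    show "(\<lambda>x. x - 2) ` R \<subseteq> A - {n}"
    proof (rule image_subsetI)
      fix x assume xR: "x \<in> R"
      then have "x \<ge> 3" "x - 2 \<in> A" using Rprop by blast+
      moreover have "x \<le> n" using xR unfolding R_def by simp
      ultimately show "x - 2 \<in> A - {n}" by auto
    qed
  qed (use fA in auto)
  have "card (A - {n}) = card A - 1" using nA fA by simp
  moreover have "card (A - {1}) = card A - 1" using one fA by simp
  moreover have "card A \<ge> 1" using one fA by (simp add: Suc_le_eq card_gt_0_iff) blast
  ultimately show ?thesis using tot c1 c2 c3 by linarith
qed

lemma dm4: "(x::nat) = 4 * (x div 4) + x mod 4" "x mod 4 < 4" by simp_all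
lemma ar2: "(i::nat) mod 4 = 0 \<Longrightarrow> 1 \<le> i \<Longrightarrow> (i - 1) mod 4 = 3"
proof -
  assume a: "i mod 4 = 0" "1 \<le> i"
  have "i = 4 * (i div 4)" using dm4(1)[of i] a by simp
  then have "i - 1 = 3 + 4 * (i div 4 - 1)" using a by linarith
  then show ?thesis by simp
qed
lemma ar3: "(c::nat) \<le> (n + 1) div 4 + 1 \<Longrightarrow> n mod 4 = 2 \<Longrightarrow> 4 * c \<le> n + 2"
proof -
  assume a: "c \<le> (n + 1) div 4 + 1" "n mod 4 = 2"
  have "n + 1 = 3 + 4 * (n div 4)" using dm4(1)[of n] a by simp
  then have "(n + 1) div 4 = n div 4" by simp
  then show ?thesis using a dm4(1)[of n] by linarith
qed
lemma ar4: "(c::nat) \<le> (n + 1) div 4 \<Longrightarrow> 4 * c \<le> n + 2"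
  using dm4(1)[of "n+1"] by linarith
lemma ar5: "(x::nat) mod 4 = 3 \<Longrightarrow> x \<le> n \<Longrightarrow> x = 4 * (x div 4) + 3 \<and> x div 4 < (n + 1) div 4"
proof -
  assume a: "x mod 4 = 3" "x \<le> n"
  have x: "x = 4 * (x div 4) + 3" using dm4(1)[of x] a by simp
  have "4 * (x div 4) + 4 \<le> n + 1" using x a by linarith
  then have "4 * (x div 4 + 1) \<le> n + 1" by simp
  then have "x div 4 + 1 \<le> (n + 1) div 4" by (metis div_le_mono nonzero_mult_div_cancel_left zero_neq_numeral)
  then show ?thesis using x by linarith
qed
lemma ar7: "(x::nat) mod 4 = 3 \<Longrightarrow> Suc x mod 4 = 0"
  by (simp add: mod_Suc)
lemma ar8: "(x::nat) mod 4 = 2 \<Longrightarrow> Suc x mod 4 = 3"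
  by (simp add: mod_Suc)
lemma ar9: "(x::nat) mod 4 = 1 \<Longrightarrow> Suc x mod 4 = 2"
  by (simp add: mod_Suc)
lemma ar10: "(x::nat) mod 4 = 0 \<or> x mod 4 = 1 \<or> x mod 4 = 2 \<or> x mod 4 = 3"
  using dm4(2)[of x] by linarith
lemma ar1: "(i::nat) mod 4 = 0 \<Longrightarrow> 1 \<le> i \<Longrightarrow> 4 \<le> i"
proof -
  assume a: "i mod 4 = 0" "1 \<le> i"
  have i: "i = 4 * (i div 4)" using dm4(1)[of i] a by simp
  then have "i div 4 \<noteq> 0" using a by auto
  then show ?thesis using i by linarith
qed

lemma witness:
  fixes n :: nat
  defines "B \<equiv> {x \<in> {1..n}. x mod 4 = 3 \<or> (x = n \<and> n mod 4 = 2)}"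
  shows "B \<in> calA (path_vertices n) (path_edges n)" and "4 * card B \<le> n + 2"
proof -
  let ?V = "path_vertices n" and ?E = "path_edges n"
  have BV: "B \<subseteq> {1..n}" unfolding B_def by auto
  have stB: "Suc i \<notin> B" if "i \<in> B" for i
  proof
    assume s: "Suc i \<in> B"
    have h1: "i \<le> n" "i mod 4 = 3 \<or> (i = n \<and> n mod 4 = 2)" using that unfolding B_def by auto
    have h2: "Suc i \<le> n" "Suc i mod 4 = 3 \<or> (Suc i = n \<and> n mod 4 = 2)" using s unfolding B_def by auto
    show False
    proof (cases "i mod 4 = 3")
      case True
      then have "Suc i mod 4 = 0" by (rule ar7)
      then show False using h2 by auto
    next
      case False
      then show False using h1 h2 by auto
    qed
  qed
  have st: "stable_set ?V ?E B"
    unfolding stable_set_def path_vertices_def path_edges_def using BV stB by auto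
  have cov: "i \<in> nbr_set ?V ?E B \<or> Suc i \<in> nbr_set ?V ?E B" if i: "1 \<le> i" "i < n" for i
  proof -
    have "i mod 4 = 0 \<or> i mod 4 = 1 \<or> i mod 4 = 2 \<or> i mod 4 = 3" by (rule ar10)
    moreover
    { assume "i mod 4 = 3"
      then have "i \<in> B" using i unfolding B_def by auto
      then have "Suc i \<in> nbr_set ?V ?E B" unfolding nbr_path using i
        by (intro conjI exI[of _ i]) auto }
    moreover
    { assume "i mod 4 = 2"
      then have "Suc i mod 4 = 3" by (rule ar8)
      then have "Suc i \<in> B" using i unfolding B_def by auto
      then have "i \<in> nbr_set ?V ?E B" unfolding nbr_path using i
        by (intro conjI exI[of _ i]) auto }
    moreover
    { assume a: "i mod 4 = 0"
      have i4: "i \<ge> 4" using a i(1) by (rule ar1)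
      have "(i - 1) mod 4 = 3" using a i(1) by (rule ar2)
      moreover have "i - 1 \<in> {1..n}" using i4 i(2) by auto
      ultimately have "i - 1 \<in> B" unfolding B_def by blast
      moreover have "Suc (i - 1) = i" using i4 by simp
      ultimately have "i \<in> nbr_set ?V ?E B" unfolding nbr_path using i i4
        by (intro conjI exI[of _ "i - 1"]) auto }
    moreover
    { assume a: "i mod 4 = 1"
      have ?thesis
      proof (cases "Suc i = n")
        case True
        then have "n mod 4 = 2" using ar9[OF a] by simp
        then have "Suc i \<in> B" using i True unfolding B_def by auto
        then have "i \<in> nbr_set ?V ?E B" unfolding nbr_path using i
        by (intro conjI exI[of _ i]) auto
        then show ?thesis by blast
      next
        case False
        have "Suc (Suc i) mod 4 = 3" using ar8[OF ar9[OF a]] .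
        moreover have "Suc (Suc i) \<le> n" using False i by linarith
        ultimately have "Suc (Suc i) \<in> B" unfolding B_def by auto
        then have "Suc i \<in> nbr_set ?V ?E B" unfolding nbr_path using i \<open>Suc (Suc i) \<le> n\<close>
          by (intro conjI exI[of _ "Suc i"]) auto
        then show ?thesis by blast
      qed }
    ultimately show ?thesis by metis
  qed
  have vc: "vertex_cover ?V ?E (nbr_set ?V ?E B)"
    unfolding vertex_cover_def
  proof
    show "nbr_set ?V ?E B \<subseteq> ?V" unfolding nbr_set_def by (rule Collect_subset)
    show "\<forall>e\<in>?E. e \<inter> nbr_set ?V ?E B \<noteq> {}"
    proof
      fix e assume "e \<in> ?E"
      then obtain i where "e = {i, Suc i}" "1 \<le> i" "i < n" unfolding path_edges_def by blast
      then show "e \<inter> nbr_set ?V ?E B \<noteq> {}" using cov[of i] by auto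
    qed
  qed
  show "B \<in> calA ?V ?E" unfolding calA_def using st min_auto[OF st vc] by auto
  let ?f = "\<lambda>k::nat. 4 * k + 3"
  show "4 * card B \<le> n + 2"
  proof (cases "n mod 4 = 2")
    case True
    have "B \<subseteq> ?f ` {..<(n + 1) div 4} \<union> {n}"
    proof
      fix x assume "x \<in> B"
      then have "x = n \<or> (x mod 4 = 3 \<and> x \<le> n)" unfolding B_def by auto
      then show "x \<in> ?f ` {..<(n + 1) div 4} \<union> {n}"
      proof
        assume "x mod 4 = 3 \<and> x \<le> n"
        then have "x = ?f (x div 4) \<and> x div 4 < (n + 1) div 4" using ar5 by blast
        then show ?thesis by auto
      qed auto
    qed
    then have "card B \<le> card (?f ` {..<(n + 1) div 4} \<union> {n})" by (intro card_mono) auto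
    also have "\<dots> \<le> card (?f ` {..<(n + 1) div 4}) + card {n}" by (rule card_Un_le)
    also have "\<dots> \<le> (n + 1) div 4 + 1" using card_image_le[of "{..<(n + 1) div 4}" ?f] by simp
    finally show ?thesis using True by (rule ar3)
  next
    case False
    have "B \<subseteq> ?f ` {..<(n + 1) div 4}"
    proof
      fix x assume "x \<in> B"
      then have "x mod 4 = 3 \<and> x \<le> n" unfolding B_def using False by auto
      then have "x = ?f (x div 4) \<and> x div 4 < (n + 1) div 4" using ar5 by blast
      then show "x \<in> ?f ` {..<(n + 1) div 4}" by auto
    qed
    then have "card B \<le> card (?f ` {..<(n + 1) div 4})" by (intro card_mono) auto
    also have "\<dots> \<le> (n + 1) div 4" using card_image_le[of "{..<(n + 1) div 4}" ?f] by simp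
    finally show ?thesis by (rule ar4)
  qed
qed

theorem lemma3p3:
  fixes n :: nat and A :: "nat set"
  assumes "A \<in> calA (path_vertices n) (path_edges n)"
    and "card A = v_number (path_vertices n) (path_edges n)"
  shows "\<not> (1 \<in> A \<and> n \<in> A)"
proof
  assume h: "1 \<in> A \<and> n \<in> A"
  let ?V = "path_vertices n" and ?E = "path_edges n"
  let ?N = "nbr_set ?V ?E A"
  have stA: "stable_set ?V ?E A" and mvc: "min_vertex_cover ?V ?E ?N"
    using assms(1) unfolding calA_def by auto
  have AV: "A \<subseteq> {1..n}" using stA unfolding stable_set_def path_vertices_def by auto
  have st: "Suc i \<notin> A" if "i \<in> A" for i
  proof
    assume "Suc i \<in> A"
    then have "{i, Suc i} \<in> ?E" using that AV unfolding path_edges_def by force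
    then show False using stA that \<open>Suc i \<in> A\<close> unfolding stable_set_def by auto
  qed
  have cov: "i \<in> ?N \<or> Suc i \<in> ?N" if "1 \<le> i" "i < n" for i
  proof -
    have "{i, Suc i} \<in> ?E" using that unfolding path_edges_def by auto
    moreover have "\<forall>e\<in>?E. e \<inter> ?N \<noteq> {}" using mvc unfolding min_vertex_cover_def vertex_cover_def by simp
    ultimately have "{i, Suc i} \<inter> ?N \<noteq> {}" by (rule bspec[rotated])
    then show ?thesis by auto
  qed
  have fA: "finite A" using AV finite_subset by blast
  have cA: "card A \<ge> 1" using h fA by (simp add: Suc_le_eq card_gt_0_iff) blast
  obtain B where B: "B \<in> calA ?V ?E" "4 * card B \<le> n + 2" using witness by blast
  have fin: "finite (card ` calA ?V ?E)"
  proof -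
    have "calA ?V ?E \<subseteq> Pow {1..n}"
      unfolding calA_def stable_set_def path_vertices_def by auto
    then show ?thesis by (meson finite_Pow_iff finite_atLeastAtMost finite_imageI finite_subset)
  qed
  have "card B \<in> card ` calA ?V ?E" using B(1) by (rule imageI)
  then have "card A \<le> card B" using assms(2) Min_le[OF fin] unfolding v_number_def by simp
  moreover have "card B < card A"
  proof (cases "n \<ge> 2")
    case True
    have "n + 3 \<le> 4 * card A"
      by (rule lower[OF AV st cov nbr_path _ _]) (use h in auto)
    then show ?thesis using B(2) by linarith
  next
    case False
    have "1 \<le> n" using h AV by auto
    then have "4 * card B \<le> 3" using B(2) False by linarith
    then show ?thesis using cA by linarith
  qed
  ultimately show False by linarith
qed

end
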